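(* Let $I\times J$ be a dyadic square and let $\Phi(x_1,\ldots,x_m,y_1,\ldots,y_n)$ be a bounded measurable function. For a dyadic square $I'\times J'$ put $\mathcal{B}_{I'\times J'}:=\big[\Phi(x_1,\ldots,x_m,y_1,\ldots,y_n)\big]_{x_1,\ldots,x_m\in I',\,y_1,\ldots,y_n\in J'}$. Then $$\Box\mathcal{B}_{I\times J}=\sum_{\substack{S\subseteq\{1,\ldots,m\},\ T\subseteq\{1,\ldots,n\}\\ |S|,|T|\ \text{even},\ (S,T)\neq(\emptyset,\emptyset)}}\Big[\big\langle\Phi(x_1,\ldots,x_m,y_1,\ldots,y_n)\big\rangle_{x_i\in I\ (i\in S),\ y_j\in J\ (j\in T)}\Big]_{x_i\in I\ (i\notin S),\ y_j\in J\ (j\notin T)} .$$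
   Context: For a dyadic interval $I$ with left half $I_l$ and right half $I_r$ and an integrable $f$, write $[f(x)]_{x\in I}:=\frac{1}{|I|}\int_I f(x)\,dx$ and $\langle f(x)\rangle_{x\in I}:=\frac{1}{|I|}\big(\int_{I_l}f(x)\,dx-\int_{I_r}f(x)\,dx\big)$. Brackets with several subscripted variables denote the corresponding iterated averages in each variable (the order is irrelevant). For a quantity $\mathcal{B}$ defined for every dyadic square, its first order difference is $\Box\mathcal{B}_{I\times J}:=\frac14\big(\mathcal{B}_{I_l\times J_l}+\mathcal{B}_{I_l\times J_r}+\mathcal{B}_{I_r\times J_l}+\mathcal{B}_{I_r\times J_r}\big)-\mathcal{B}_{I\times J}$. *)

theory Defs
  imports "HOL-Analysis.Analysis"
begin

definition dint :: "int \<Rightarrow> int \<Rightarrow> real set" where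
  "dint j k = {real_of_int k / 2 powi j ..< (real_of_int k + 1) / 2 powi j}"

definition dleft :: "int \<Rightarrow> int \<Rightarrow> real set" where
  "dleft j k = dint (j + 1) (2 * k)"

definition dright :: "int \<Rightarrow> int \<Rightarrow> real set" where
  "dright j k = dint (j + 1) (2 * k + 1)"

definition avg1 :: "real set \<Rightarrow> real measure" where
  "avg1 A = uniform_measure lborel A"

text \<open>Haar weight of dint j k: 1 on left half, -1 on right half.
  The Haar bracket of one variable is the average of f times this weight:
  (1/|I|)(int_{I_l} f - int_{I_r} f).\<close>
definition haarw :: "int \<Rightarrow> int \<Rightarrow> real \<Rightarrow> real" where
  "haarw j k t = indicator (dleft j k) t - indicator (dright j k) t"

text \<open>Iterated average [Phi]_{x_1..x_m in A, y_1..y_n in B} (coordinates 0..m-1, 0..n-1).\<close>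
definition Bavg :: "nat \<Rightarrow> nat \<Rightarrow> ((nat \<Rightarrow> real) \<Rightarrow> (nat \<Rightarrow> real) \<Rightarrow> real)
      \<Rightarrow> real set \<Rightarrow> real set \<Rightarrow> real" where
  "Bavg m n \<Phi> A B =
     (\<integral>x. (\<integral>y. \<Phi> x y \<partial>(PiM {..<n} (\<lambda>_. avg1 B))) \<partial>(PiM {..<m} (\<lambda>_. avg1 A)))"

definition mixed :: "nat \<Rightarrow> nat \<Rightarrow> ((nat \<Rightarrow> real) \<Rightarrow> (nat \<Rightarrow> real) \<Rightarrow> real)
      \<Rightarrow> int \<Rightarrow> int \<Rightarrow> int \<Rightarrow> nat set \<Rightarrow> nat set \<Rightarrow> real" where
  "mixed m n \<Phi> j k1 k2 S T =
     (\<integral>x. (\<integral>y. \<Phi> x y * (\<Prod>i\<in>S. haarw j k1 (x i)) * (\<Prod>l\<in>T. haarw j k2 (y l))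
        \<partial>(PiM {..<n} (\<lambda>_. avg1 (dint j k2)))) \<partial>(PiM {..<m} (\<lambda>_. avg1 (dint j k1))))"

definition box :: "(real set \<Rightarrow> real set \<Rightarrow> real) \<Rightarrow> int \<Rightarrow> int \<Rightarrow> int \<Rightarrow> real" where
  "box \<B> j k1 k2 =
     (\<B> (dleft j k1) (dleft j k2) + \<B> (dleft j k1) (dright j k2)
      + \<B> (dright j k1) (dleft j k2) + \<B> (dright j k1) (dright j k2)) / 4
     - \<B> (dint j k1) (dint j k2)"

end

theory Submission
  imports Defs "HOL-Probability.Probability"
begin

lemma dint_eq: "dint j k = {real_of_int k / 2 powi j ..< (real_of_int k + 1) / 2 powi j}"
  by (simp add: dint_def)

lemma pow_succ: "(2::real) powi (j+1) = 2 * 2 powi j"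
  by (simp add: power_int_add)

lemma dleft_eq: "dleft j k = {real_of_int k / 2 powi j ..< (real_of_int k + 1/2) / 2 powi j}"
  unfolding dleft_def dint_def pow_succ by (auto simp: field_simps)

lemma dright_eq: "dright j k = {(real_of_int k + 1/2) / 2 powi j ..< (real_of_int k + 1) / 2 powi j}"
  unfolding dright_def dint_def pow_succ by (auto simp: field_simps)

lemma meas_dint: "emeasure lborel (dint j k) = ennreal (1 / 2 powi j)"
  unfolding dint_eq by (subst emeasure_lborel_Ico) (auto simp: field_simps)
lemma meas_dleft: "emeasure lborel (dleft j k) = ennreal (1 / (2 * 2 powi j))"
  unfolding dleft_eq by (subst emeasure_lborel_Ico) (auto simp: field_simps)
lemma meas_dright: "emeasure lborel (dright j k) = ennreal (1 / (2 * 2 powi j))"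
  unfolding dright_eq by (subst emeasure_lborel_Ico) (auto simp: field_simps)

lemma haarw_cases: "haarw j k t = (if t \<in> dleft j k then 1 else if t \<in> dright j k then -1 else 0)"
  unfolding haarw_def dleft_eq dright_eq by (auto simp: indicator_def)

lemma dint_split: "t \<in> dint j k \<longleftrightarrow> t \<in> dleft j k \<or> t \<in> dright j k"
proof -
  have p: "0 < (2::real) powi j" by simp
  have a: "real_of_int k / 2 powi j \<le> (real_of_int k + 1/2) / 2 powi j"
    using p by (intro divide_right_mono) auto
  have b: "(real_of_int k + 1/2) / 2 powi j \<le> (real_of_int k + 1) / 2 powi j"
    using p by (intro divide_right_mono) auto
  show ?thesis unfolding dint_eq dleft_eq dright_eq using a b by auto
qed

lemma haarw_bound: "\<bar>haarw j k t\<bar> \<le> 1"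
  by (simp add: haarw_cases)

lemma dint_sets[measurable]: "dint j k \<in> sets borel" unfolding dint_eq by simp
lemma dleft_sets[measurable]: "dleft j k \<in> sets borel" unfolding dleft_eq by simp
lemma dright_sets[measurable]: "dright j k \<in> sets borel" unfolding dright_eq by simp

lemma haarw_meas[measurable]: "haarw j k \<in> borel_measurable borel"
  unfolding haarw_def dleft_eq dright_eq by measurable

lemma avg1_left: "avg1 (dleft j k) = density (avg1 (dint j k)) (\<lambda>t. ennreal (1 + haarw j k t))"
  unfolding avg1_def uniform_measure_def
proof (subst density_density_eq)
  show "density lborel (\<lambda>x. indicator (dleft j k) x / emeasure lborel (dleft j k)) =
    density lborel (\<lambda>x. indicator (dint j k) x / emeasure lborel (dint j k) * ennreal (1 + haarw j k x))"
  proof (rule density_cong)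
    have p: "0 < (2::real) powi j" by simp
    show "AE x in lborel. indicator (dleft j k) x / emeasure lborel (dleft j k) =
       indicator (dint j k) x / emeasure lborel (dint j k) * ennreal (1 + haarw j k x)"
    proof (rule AE_I2)
      fix x
      show "indicator (dleft j k) x / emeasure lborel (dleft j k) =
       indicator (dint j k) x / emeasure lborel (dint j k) * ennreal (1 + haarw j k x)"
      proof (cases "x \<in> dleft j k")
        case True
        have e1: "1 / ennreal (1 / (2 * 2 powi j)) = ennreal (2 * 2 powi j)"
          using divide_ennreal[of 1 "1 / (2 * 2 powi j)"] p by simp
        have e2: "1 / ennreal (1 / 2 powi j) * 2 = ennreal (2 * 2 powi j)"
          using divide_ennreal[of 1 "1 / 2 powi j"] p ennreal_mult''[of 2 "2 powi j"] by (simp add: mult.commute)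
        show ?thesis using True p e1 e2 by (simp add: dint_split haarw_cases meas_dint meas_dleft)
      next
        case False
        then show ?thesis using p by (auto simp: dint_split haarw_cases meas_dint meas_dleft)
      qed
    qed
  qed auto
qed auto

lemma avg1_right: "avg1 (dright j k) = density (avg1 (dint j k)) (\<lambda>t. ennreal (1 - haarw j k t))"
  unfolding avg1_def uniform_measure_def
proof (subst density_density_eq)
  show "density lborel (\<lambda>x. indicator (dright j k) x / emeasure lborel (dright j k)) =
    density lborel (\<lambda>x. indicator (dint j k) x / emeasure lborel (dint j k) * ennreal (1 - haarw j k x))"
  proof (rule density_cong)
    have p: "0 < (2::real) powi j" by simp
    show "AE x in lborel. indicator (dright j k) x / emeasure lborel (dright j k) =
       indicator (dint j k) x / emeasure lborel (dint j k) * ennreal (1 - haarw j k x)"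
    proof (rule AE_I2)
      fix x
      show "indicator (dright j k) x / emeasure lborel (dright j k) =
       indicator (dint j k) x / emeasure lborel (dint j k) * ennreal (1 - haarw j k x)"
      proof (cases "x \<in> dright j k")
        case True
        then have nl: "x \<notin> dleft j k" unfolding dleft_eq dright_eq by auto
        have e1: "1 / ennreal (1 / (2 * 2 powi j)) = ennreal (2 * 2 powi j)"
          using divide_ennreal[of 1 "1 / (2 * 2 powi j)"] p by simp
        have e2: "1 / ennreal (1 / 2 powi j) * 2 = ennreal (2 * 2 powi j)"
          using divide_ennreal[of 1 "1 / 2 powi j"] p ennreal_mult''[of 2 "2 powi j"] by (simp add: mult.commute)
        show ?thesis using True nl p e1 e2 by (simp add: dint_split haarw_cases meas_dint meas_dright)
      next
        case False
        then show ?thesis using p by (auto simp: dint_split haarw_cases meas_dint meas_dright)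
      qed
    qed
  qed auto
qed auto

lemma PiM_density:
  assumes I: "finite I" and M: "sigma_finite_measure M" and g[measurable]: "g \<in> borel_measurable M"
    and D: "sigma_finite_measure (density M g)"
  shows "PiM I (\<lambda>_. density M g) = density (PiM I (\<lambda>_. M)) (\<lambda>x. \<Prod>i\<in>I. g (x i))"
proof -
  interpret D: product_sigma_finite "\<lambda>_. density M g" using D by (simp add: product_sigma_finite_def)
  interpret MM: product_sigma_finite "\<lambda>_. M" using M by (simp add: product_sigma_finite_def)
  have "density (PiM I (\<lambda>_. M)) (\<lambda>x. \<Prod>i\<in>I. g (x i)) = PiM I (\<lambda>_. density M g)"
  proof (rule D.PiM_eqI[OF I])
    show "sets (density (PiM I (\<lambda>_. M)) (\<lambda>x. \<Prod>i\<in>I. g (x i))) = sets (PiM I (\<lambda>_. density M g))"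
      by (auto intro!: sets_PiM_cong)
  next
    fix A assume A: "\<And>i. i \<in> I \<Longrightarrow> A i \<in> sets (density M g)"
    then have A'[measurable]: "\<And>i. i \<in> I \<Longrightarrow> A i \<in> sets M" by simp
    have gm: "(\<lambda>x. \<Prod>i\<in>I. g (x i)) \<in> borel_measurable (PiM I (\<lambda>_. M))" by measurable
    have "Pi\<^sub>E I A \<in> sets (PiM I (\<lambda>_. M))" using A' by (auto intro!: sets_PiM_I_finite I)
    then have "emeasure (density (PiM I (\<lambda>_. M)) (\<lambda>x. \<Prod>i\<in>I. g (x i))) (Pi\<^sub>E I A)
       = (\<integral>\<^sup>+ x. (\<Prod>i\<in>I. g (x i)) * indicator (Pi\<^sub>E I A) x \<partial>PiM I (\<lambda>_. M))"
      by (subst emeasure_density) (auto intro!: gm)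
    also have "\<dots> = (\<integral>\<^sup>+ x. (\<Prod>i\<in>I. g (x i) * indicator (A i) (x i)) \<partial>PiM I (\<lambda>_. M))"
    proof (rule nn_integral_cong)
      fix x assume "x \<in> space (PiM I (\<lambda>_. M))"
      then have "x \<in> extensional I" by (auto simp: space_PiM PiE_def)
      then have "indicator (Pi\<^sub>E I A) x = (\<Prod>i\<in>I. indicator (A i) (x i) :: ennreal)"
        by (auto simp: indicator_def PiE_def Pi_def I)
      then show "(\<Prod>i\<in>I. g (x i)) * indicator (Pi\<^sub>E I A) x = (\<Prod>i\<in>I. g (x i) * indicator (A i) (x i))"
        by (simp add: prod.distrib)
    qed
    also have "\<dots> = (\<Prod>i\<in>I. \<integral>\<^sup>+ t. g t * indicator (A i) t \<partial>M)"
      by (rule MM.product_nn_integral_prod[OF I, of "\<lambda>i t. g t * indicator (A i) t"]) (use A' in auto)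
    also have "\<dots> = (\<Prod>i\<in>I. emeasure (density M g) (A i))"
      by (intro prod.cong refl, subst emeasure_density) (use A' in auto)
    finally show "emeasure (density (PiM I (\<lambda>_. M)) (\<lambda>x. \<Prod>i\<in>I. g (x i))) (Pi\<^sub>E I A)
       = (\<Prod>i\<in>I. emeasure (density M g) (A i))" .
  qed
  then show ?thesis by simp
qed

lemma lin2:
  fixes F :: "'c \<Rightarrow> 'a \<Rightarrow> 'b \<Rightarrow> real"
  assumes PM: "prob_space M" and PN: "prob_space N" and A: "finite A"
    and meas: "\<And>a. a \<in> A \<Longrightarrow> (\<lambda>(x,y). F a x y) \<in> borel_measurable (M \<Otimes>\<^sub>M N)"
    and bnd: "\<And>a. a \<in> A \<Longrightarrow> \<exists>C. \<forall>x y. \<bar>F a x y\<bar> \<le> C"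
  shows "(\<integral>x. (\<integral>y. (\<Sum>a\<in>A. c a * F a x y) \<partial>N) \<partial>M) = (\<Sum>a\<in>A. c a * (\<integral>x. (\<integral>y. F a x y \<partial>N) \<partial>M))"
proof -
  interpret pair_prob_space M N using PM PN by (simp add: pair_prob_space_def pair_sigma_finite_def prob_space_imp_sigma_finite)
  have intP: "integrable (M \<Otimes>\<^sub>M N) (\<lambda>(x,y). F a x y)" if a: "a \<in> A" for a
  proof -
    obtain C where C: "\<forall>x y. \<bar>F a x y\<bar> \<le> C" using bnd[OF a] by blast
    show ?thesis
      by (rule P.integrable_const_bound[where B=C]) (use C meas[OF a] in auto)
  qed
  have intN: "integrable N (\<lambda>y. F a x y)" if a: "a \<in> A" and x: "x \<in> space M" for a x
  proof -
    obtain C where C: "\<forall>x y. \<bar>F a x y\<bar> \<le> C" using bnd[OF a] by blast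
    have "(\<lambda>y. (\<lambda>(x,y). F a x y) (x, y)) \<in> borel_measurable N"
      by (rule measurable_Pair2[OF meas[OF a] x])
    then show ?thesis
      by (intro M2.integrable_const_bound[where B=C]) (use C in auto)
  qed
  have "(\<integral>x. (\<integral>y. (\<Sum>a\<in>A. c a * F a x y) \<partial>N) \<partial>M) = (\<integral>x. (\<Sum>a\<in>A. c a * (\<integral>y. F a x y \<partial>N)) \<partial>M)"
  proof (rule Bochner_Integration.integral_cong[OF refl])
    fix x assume x: "x \<in> space M"
    have "(\<integral>y. (\<Sum>a\<in>A. c a * F a x y) \<partial>N) = (\<Sum>a\<in>A. (\<integral>y. c a * F a x y \<partial>N))"
      by (rule Bochner_Integration.integral_sum) (use intN x in auto)
    then show "(\<integral>y. (\<Sum>a\<in>A. c a * F a x y) \<partial>N) = (\<Sum>a\<in>A. c a * (\<integral>y. F a x y \<partial>N))"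
      by simp
  qed
  also have "\<dots> = (\<Sum>a\<in>A. c a * (\<integral>x. (\<integral>y. F a x y \<partial>N) \<partial>M))"
  proof (subst Bochner_Integration.integral_sum)
    fix a assume a: "a \<in> A"
    show "integrable M (\<lambda>x. c a * (\<integral>y. F a x y \<partial>N))"
      using integrable_fst'[OF intP[OF a]] by simp
  qed simp
  finally show ?thesis .
qed

lemma dens2:
  fixes F :: "'a \<Rightarrow> 'b \<Rightarrow> real"
  assumes SM: "sigma_finite_measure M" and SN: "sigma_finite_measure N"
    and g1[measurable]: "g1 \<in> borel_measurable M" and g2[measurable]: "g2 \<in> borel_measurable N"
    and p1: "\<And>x. 0 \<le> g1 x" and p2: "\<And>y. 0 \<le> g2 y"
    and meas[measurable]: "(\<lambda>(x,y). F x y) \<in> borel_measurable (M \<Otimes>\<^sub>M N)"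
  shows "(\<integral>x. (\<integral>y. F x y \<partial>density N (\<lambda>y. ennreal (g2 y))) \<partial>density M (\<lambda>x. ennreal (g1 x)))
       = (\<integral>x. (\<integral>y. g1 x * g2 y * F x y \<partial>N) \<partial>M)"
proof -
  interpret N: sigma_finite_measure N by (rule SN)
  have inner: "(\<integral>y. F x y \<partial>density N (\<lambda>y. ennreal (g2 y))) = (\<integral>y. g2 y * F x y \<partial>N)"
    if x: "x \<in> space M" for x
  proof -
    have "(\<lambda>y. (\<lambda>(x,y). F x y) (x, y)) \<in> borel_measurable N"
      by (rule measurable_Pair2[OF meas x])
    then show ?thesis by (subst integral_density) (auto simp: p2)
  qed
  have m2: "(\<lambda>(x,y). g2 y * F x y) \<in> borel_measurable (M \<Otimes>\<^sub>M N)" by measurable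
  have psi: "(\<lambda>x. \<integral>y. g2 y * F x y \<partial>N) \<in> borel_measurable M"
    using N.borel_measurable_lebesgue_integral[OF m2] by simp
  have "(\<integral>x. (\<integral>y. F x y \<partial>density N (\<lambda>y. ennreal (g2 y))) \<partial>density M (\<lambda>x. ennreal (g1 x)))
      = (\<integral>x. (\<integral>y. g2 y * F x y \<partial>N) \<partial>density M (\<lambda>x. ennreal (g1 x)))"
    by (rule Bochner_Integration.integral_cong[OF refl]) (simp add: inner)
  also have "\<dots> = (\<integral>x. g1 x * (\<integral>y. g2 y * F x y \<partial>N) \<partial>M)"
    by (subst integral_density) (auto simp: psi p1)
  also have "\<dots> = (\<integral>x. (\<integral>y. g1 x * g2 y * F x y \<partial>N) \<partial>M)"
    by (rule Bochner_Integration.integral_cong[OF refl]) (simp add: mult.assoc)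
  finally show ?thesis .
qed

definition sg :: "bool \<Rightarrow> real" where "sg b = (if b then 1 else -1)"
definition side :: "int \<Rightarrow> int \<Rightarrow> bool \<Rightarrow> real set" where
  "side j k b = (if b then dleft j k else dright j k)"

lemma avg1_side: "avg1 (side j k b) = density (avg1 (dint j k)) (\<lambda>t. ennreal (1 + sg b * haarw j k t))"
  by (cases b) (simp_all add: side_def sg_def avg1_left avg1_right)

lemma sg_nonneg: "0 \<le> 1 + sg b * haarw j k t"
  by (auto simp: sg_def haarw_cases)

lemma prob_avg1_dint: "prob_space (avg1 (dint j k))"
  unfolding avg1_def by (rule prob_space_uniform_measure) (simp_all add: meas_dint)

lemma prob_avg1_side: "prob_space (avg1 (side j k b))"
  unfolding avg1_def side_def by (rule prob_space_uniform_measure) (simp_all add: meas_dleft meas_dright)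

lemma expand:
  fixes f :: "nat \<Rightarrow> real"
  assumes "finite I"
  shows "(\<Prod>i\<in>I. 1 + s * f i) = (\<Sum>S\<in>Pow I. s ^ card S * (\<Prod>i\<in>S. f i))"
proof -
  have "(\<Prod>i\<in>I. 1 + s * f i) = (\<Prod>i\<in>I. s * f i + 1)" by (simp add: add.commute)
  also have "\<dots> = (\<Sum>X\<in>Pow I. (\<Prod>i\<in>X. s * f i) * (\<Prod>i\<in>I - X. 1))"
    by (rule prod_add[OF assms])
  also have "\<dots> = (\<Sum>S\<in>Pow I. s ^ card S * (\<Prod>i\<in>S. f i))"
    by (simp add: prod.distrib)
  finally show ?thesis .
qed

lemma PiM_side:
  fixes m :: nat shows "PiM {..<m} (\<lambda>_. avg1 (side j k b)) =
   density (PiM {..<m} (\<lambda>_. avg1 (dint j k))) (\<lambda>x. ennreal (\<Prod>i\<in>{..<m}. 1 + sg b * haarw j k (x i)))"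
proof -
  have "PiM {..<m} (\<lambda>_. avg1 (side j k b)) =
     PiM {..<m} (\<lambda>_. density (avg1 (dint j k)) (\<lambda>t. ennreal (1 + sg b * haarw j k t)))"
    by (simp add: avg1_side)
  also have "\<dots> = density (PiM {..<m} (\<lambda>_. avg1 (dint j k))) (\<lambda>x. \<Prod>i\<in>{..<m}. ennreal (1 + sg b * haarw j k (x i)))"
  proof (rule PiM_density)
    show "sigma_finite_measure (avg1 (dint j k))"
      using prob_avg1_dint prob_space_imp_sigma_finite by blast
    show "sigma_finite_measure (density (avg1 (dint j k)) (\<lambda>t. ennreal (1 + sg b * haarw j k t)))"
      using prob_avg1_side[of j k b] prob_space_imp_sigma_finite by (simp add: avg1_side)
    show "(\<lambda>t. ennreal (1 + sg b * haarw j k t)) \<in> borel_measurable (avg1 (dint j k))"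
      unfolding avg1_def by measurable
  qed simp
  also have "\<dots> = density (PiM {..<m} (\<lambda>_. avg1 (dint j k))) (\<lambda>x. ennreal (\<Prod>i\<in>{..<m}. 1 + sg b * haarw j k (x i)))"
    by (simp add: prod_ennreal sg_nonneg)
  finally show ?thesis .
qed

lemma Bavg_side:
  fixes m n :: nat and j k1 k2 :: int
    and \<Phi> :: "(nat \<Rightarrow> real) \<Rightarrow> (nat \<Rightarrow> real) \<Rightarrow> real"
  assumes meas: "(\<lambda>(x, y). \<Phi> x y) \<in> borel_measurable
                   (PiM {..<m} (\<lambda>_. lborel) \<Otimes>\<^sub>M PiM {..<n} (\<lambda>_. lborel))"
    and bdd: "\<exists>C. \<forall>x y. \<bar>\<Phi> x y\<bar> \<le> C"
  shows "Bavg m n \<Phi> (side j k1 b1) (side j k2 b2) =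
    (\<Sum>p\<in>Pow {..<m} \<times> Pow {..<n}. (sg b1 ^ card (fst p) * sg b2 ^ card (snd p)) * mixed m n \<Phi> j k1 k2 (fst p) (snd p))"
proof -
  define PM where "PM = PiM {..<m} (\<lambda>_. avg1 (dint j k1))"
  define PN where "PN = PiM {..<n} (\<lambda>_. avg1 (dint j k2))"
  define G1 where "G1 x = (\<Prod>i\<in>{..<m}. 1 + sg b1 * haarw j k1 (x i))" for x
  define G2 where "G2 y = (\<Prod>i\<in>{..<n}. 1 + sg b2 * haarw j k2 (y i))" for y
  define A where "A = Pow {..<m} \<times> Pow {..<n}"
  define c where "c p = sg b1 ^ card (fst p) * sg b2 ^ card (snd p)" for p :: "nat set \<times> nat set"
  define F where "F p x y = \<Phi> x y * (\<Prod>i\<in>fst p. haarw j k1 (x i)) * (\<Prod>l\<in>snd p. haarw j k2 (y l))"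
    for p :: "nat set \<times> nat set" and x y
  have PPM: "prob_space PM" unfolding PM_def by (intro prob_space_PiM prob_avg1_dint)
  have PPN: "prob_space PN" unfolding PN_def by (intro prob_space_PiM prob_avg1_dint)
  have sets_eq: "sets (PM \<Otimes>\<^sub>M PN) = sets (PiM {..<m} (\<lambda>_. lborel) \<Otimes>\<^sub>M PiM {..<n} (\<lambda>_. lborel))"
    unfolding PM_def PN_def avg1_def
    by (intro sets_pair_measure_cong sets_PiM_cong) auto
  have measP[measurable]: "(\<lambda>(x, y). \<Phi> x y) \<in> borel_measurable (PM \<Otimes>\<^sub>M PN)"
    using meas by (subst measurable_cong_sets[OF sets_eq refl])
  have setsPM: "sets PM = sets (PiM {..<m} (\<lambda>_. lborel))" unfolding PM_def avg1_def
    by (intro sets_PiM_cong) auto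
  have setsPN: "sets PN = sets (PiM {..<n} (\<lambda>_. lborel))" unfolding PN_def avg1_def
    by (intro sets_PiM_cong) auto
  have G1m: "G1 \<in> borel_measurable PM"
    unfolding measurable_cong_sets[OF setsPM refl] G1_def by measurable
  have G2m: "G2 \<in> borel_measurable PN"
    unfolding measurable_cong_sets[OF setsPN refl] G2_def by measurable
  have nn1: "0 \<le> G1 x" for x unfolding G1_def by (intro prod_nonneg) (simp add: sg_nonneg)
  have nn2: "0 \<le> G2 x" for x unfolding G2_def by (intro prod_nonneg) (simp add: sg_nonneg)
  have "Bavg m n \<Phi> (side j k1 b1) (side j k2 b2) =
     (\<integral>x. (\<integral>y. \<Phi> x y \<partial>density PN (\<lambda>y. ennreal (G2 y))) \<partial>density PM (\<lambda>x. ennreal (G1 x)))"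
    unfolding Bavg_def PiM_side PM_def PN_def G1_def G2_def ..
  also have "\<dots> = (\<integral>x. (\<integral>y. G1 x * G2 y * \<Phi> x y \<partial>PN) \<partial>PM)"
    by (rule dens2) (use PPM PPN prob_space_imp_sigma_finite G1m G2m measP nn1 nn2 in auto)
  also have "\<dots> = (\<integral>x. (\<integral>y. (\<Sum>p\<in>A. c p * F p x y) \<partial>PN) \<partial>PM)"
  proof -
    have "G1 x * G2 y * \<Phi> x y = (\<Sum>p\<in>A. c p * F p x y)" for x y
    proof -
      have "G1 x * G2 y = (\<Sum>S\<in>Pow {..<m}. sg b1 ^ card S * (\<Prod>i\<in>S. haarw j k1 (x i))) *
                         (\<Sum>T\<in>Pow {..<n}. sg b2 ^ card T * (\<Prod>i\<in>T. haarw j k2 (y i)))"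
        unfolding G1_def G2_def by (simp add: expand)
      also have "\<dots> = (\<Sum>p\<in>A. (sg b1 ^ card (fst p) * (\<Prod>i\<in>fst p. haarw j k1 (x i))) *
                         (sg b2 ^ card (snd p) * (\<Prod>i\<in>snd p. haarw j k2 (y i))))"
        unfolding A_def sum_product sum.cartesian_product by (simp add: case_prod_beta)
      finally show ?thesis
        by (simp add: sum_distrib_right sum_distrib_left c_def F_def algebra_simps)
    qed
    then show ?thesis by simp
  qed
  also have "\<dots> = (\<Sum>p\<in>A. c p * (\<integral>x. (\<integral>y. F p x y \<partial>PN) \<partial>PM))"
  proof (rule lin2[OF PPM PPN])
    show "finite A" unfolding A_def by simp
  next
    fix p assume pA: "p \<in> A"
    have hm: "haarw j k \<in> borel_measurable (avg1 (dint j k'))" for k k'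
      unfolding avg1_def by measurable
    have h1: "(\<lambda>z. haarw j k1 (fst z i)) \<in> borel_measurable (PM \<Otimes>\<^sub>M PN)" if "i \<in> fst p" for i
    proof -
      have "i \<in> {..<m}" using pA that unfolding A_def by auto
      then have c1: "(\<lambda>x. x i) \<in> measurable PM (avg1 (dint j k1))"
        unfolding PM_def by (rule measurable_component_singleton)
      have c2: "(\<lambda>z. fst z i) \<in> measurable (PM \<Otimes>\<^sub>M PN) (avg1 (dint j k1))"
        by (rule measurable_compose[OF measurable_fst c1])
      show ?thesis using measurable_compose[OF c2 hm] by simp
    qed
    have h2: "(\<lambda>z. haarw j k2 (snd z i)) \<in> borel_measurable (PM \<Otimes>\<^sub>M PN)" if "i \<in> snd p" for i
    proof -
      have "i \<in> {..<n}" using pA that unfolding A_def by auto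
      then have c1: "(\<lambda>x. x i) \<in> measurable PN (avg1 (dint j k2))"
        unfolding PN_def by (rule measurable_component_singleton)
      have c2: "(\<lambda>z. snd z i) \<in> measurable (PM \<Otimes>\<^sub>M PN) (avg1 (dint j k2))"
        by (rule measurable_compose[OF measurable_snd c1])
      show ?thesis using measurable_compose[OF c2 hm] by simp
    qed
    have "(\<lambda>z. (\<lambda>(x,y). \<Phi> x y) z * (\<Prod>i\<in>fst p. haarw j k1 (fst z i)) * (\<Prod>l\<in>snd p. haarw j k2 (snd z l)))
       \<in> borel_measurable (PM \<Otimes>\<^sub>M PN)"
      by (intro borel_measurable_times borel_measurable_prod measP h1 h2)
    then show "(\<lambda>(x,y). F p x y) \<in> borel_measurable (PM \<Otimes>\<^sub>M PN)"
      unfolding F_def by (simp add: case_prod_beta)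
  next
    fix p assume "p \<in> A"
    obtain C where C: "\<forall>x y. \<bar>\<Phi> x y\<bar> \<le> C" using bdd by blast
    have "\<bar>F p x y\<bar> \<le> C" for x y
    proof -
      have a: "\<bar>\<Prod>i\<in>fst p. haarw j k1 (x i)\<bar> \<le> 1"
        unfolding abs_prod by (intro prod_le_1) (auto simp: haarw_bound)
      have b: "\<bar>\<Prod>i\<in>snd p. haarw j k2 (y i)\<bar> \<le> 1"
        unfolding abs_prod by (intro prod_le_1) (auto simp: haarw_bound)
      have "\<bar>F p x y\<bar> = \<bar>\<Phi> x y\<bar> * \<bar>\<Prod>i\<in>fst p. haarw j k1 (x i)\<bar> * \<bar>\<Prod>i\<in>snd p. haarw j k2 (y i)\<bar>"
        unfolding F_def by (simp add: abs_mult)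
      also have "\<dots> \<le> C * 1 * 1"
      proof -
        have C0: "0 \<le> C" using C abs_ge_zero[of "\<Phi> x y"] by (meson order_trans)
        show ?thesis using C a b C0 by (intro mult_mono) auto
      qed
      finally show ?thesis by simp
    qed
    then show "\<exists>C. \<forall>x y. \<bar>F p x y\<bar> \<le> C" by blast
  qed
  also have "\<dots> = (\<Sum>p\<in>Pow {..<m} \<times> Pow {..<n}. (sg b1 ^ card (fst p) * sg b2 ^ card (snd p)) * mixed m n \<Phi> j k1 k2 (fst p) (snd p))"
    unfolding A_def c_def F_def mixed_def PM_def PN_def ..
  finally show ?thesis .
qed

theorem theorem2:
  fixes m n :: nat and j k1 k2 :: int
    and \<Phi> :: "(nat \<Rightarrow> real) \<Rightarrow> (nat \<Rightarrow> real) \<Rightarrow> real"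
  assumes meas: "(\<lambda>(x, y). \<Phi> x y) \<in> borel_measurable
                   (PiM {..<m} (\<lambda>_. lborel) \<Otimes>\<^sub>M PiM {..<n} (\<lambda>_. lborel))"
    and bdd: "\<exists>C. \<forall>x y. \<bar>\<Phi> x y\<bar> \<le> C"
  shows "box (Bavg m n \<Phi>) j k1 k2 =
    (\<Sum>(S, T) \<in> {(S, T). S \<subseteq> {..<m} \<and> T \<subseteq> {..<n} \<and> even (card S) \<and> even (card T)
                        \<and> (S, T) \<noteq> ({}, {})}.
       mixed m n \<Phi> j k1 k2 S T)"
proof -
  define A where "A = Pow {..<m} \<times> Pow {..<n}"
  define M where "M p = mixed m n \<Phi> j k1 k2 (fst p) (snd p)" for p
  define P where "P p = (even (card (fst p)) \<and> even (card (snd p)))" for p :: "nat set \<times> nat set"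
  have fA: "finite A" unfolding A_def by simp
  have B: "Bavg m n \<Phi> (side j k1 b1) (side j k2 b2) =
     (\<Sum>p\<in>A. (sg b1 ^ card (fst p) * sg b2 ^ card (snd p)) * M p)" for b1 b2
    unfolding A_def M_def by (rule Bavg_side[OF meas bdd])
  have B0: "Bavg m n \<Phi> (dint j k1) (dint j k2) = M ({}, {})"
    unfolding M_def mixed_def Bavg_def by simp
  have pt: "((1::real)^s * 1^t + 1^s*(-1)^t + (-1)^s*1^t + (-1)^s*(-1)^t)/4 = (if even s \<and> even t then 1 else 0)"
    for s t :: nat
    by (cases "even s"; cases "even t") (auto simp: minus_one_power_iff)
  have "(Bavg m n \<Phi> (side j k1 True) (side j k2 True) + Bavg m n \<Phi> (side j k1 True) (side j k2 False)
        + Bavg m n \<Phi> (side j k1 False) (side j k2 True) + Bavg m n \<Phi> (side j k1 False) (side j k2 False)) / 4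
     = (\<Sum>p\<in>A. (if P p then 1 else 0) * M p)"
    unfolding B sum.distrib[symmetric] sum_divide_distrib
  proof (rule sum.cong[OF refl])
    fix p
    have "((1::real)^card (fst p) * 1^card (snd p) + 1^card (fst p)*(-1)^card (snd p)
           + (-1)^card (fst p)*1^card (snd p) + (-1)^card (fst p)*(-1)^card (snd p))/4 * M p
          = (if P p then 1 else 0) * M p"
      unfolding pt P_def ..
    then show "(sg True ^ card (fst p) * sg True ^ card (snd p) * M p +
          sg True ^ card (fst p) * sg False ^ card (snd p) * M p +
          sg False ^ card (fst p) * sg True ^ card (snd p) * M p +
          sg False ^ card (fst p) * sg False ^ card (snd p) * M p) / 4 =
         (if P p then 1 else 0) * M p"
      by (simp add: sg_def algebra_simps add_divide_distrib)
  qed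
  also have "\<dots> = (\<Sum>p\<in>{p\<in>A. P p}. M p)"
    by (simp add: sum.inter_filter[OF fA]; intro sum.cong refl; simp)
  finally have E: "(Bavg m n \<Phi> (side j k1 True) (side j k2 True) + Bavg m n \<Phi> (side j k1 True) (side j k2 False)
        + Bavg m n \<Phi> (side j k1 False) (side j k2 True) + Bavg m n \<Phi> (side j k1 False) (side j k2 False)) / 4
     = (\<Sum>p\<in>{p\<in>A. P p}. M p)" .
  have inF: "({}, {}) \<in> {p\<in>A. P p}" unfolding A_def P_def by auto
  have setq: "{(S, T). S \<subseteq> {..<m} \<and> T \<subseteq> {..<n} \<and> even (card S) \<and> even (card T) \<and> (S, T) \<noteq> ({}, {})}
      = {p\<in>A. P p} - {({}, {})}"
    unfolding A_def P_def by auto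
  have "box (Bavg m n \<Phi>) j k1 k2 = (\<Sum>p\<in>{p\<in>A. P p}. M p) - M ({}, {})"
    unfolding box_def B0[symmetric] E[symmetric] by (simp add: side_def)
  also have "\<dots> = (\<Sum>p\<in>{p\<in>A. P p} - {({}, {})}. M p)"
    using sum_diff1[of "{p\<in>A. P p}" M "({}, {})"] fA inF by simp
  also have "\<dots> = (\<Sum>(S, T) \<in> {(S, T). S \<subseteq> {..<m} \<and> T \<subseteq> {..<n} \<and> even (card S) \<and> even (card T)
                        \<and> (S, T) \<noteq> ({}, {})}. mixed m n \<Phi> j k1 k2 S T)"
    unfolding setq M_def by (simp add: case_prod_beta)
  finally show ?thesis .
qed

end
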